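(* Let $(X,d)$ be a complete metric space, $k\ge2$, $0<\rho<1$, and $\nu$ a coordinatewise $\rho$-contractive $(k+1)$-mean on $X$. Then $\nu$ admits exactly one stable reduction; moreover, if $\nu$ is symmetric, this stable reduction is symmetric.
   Context: A $k$-mean is a map $\mu:X^k\to X$ with $\mu(x,\ldots,x)=x$; symmetric means invariant under permutations of arguments. Coordinatewise $\rho$-contractive: $d(\nu(\mathbf{x}),\nu(\mathbf{y}))\le\rho\,d(x_j,y_j)$ whenever $\mathbf{x},\mathbf{y}$ differ only in coordinate $j$. A $k$-mean $\mu$ is a stable reduction of the $(k+1)$-mean $\nu$ if $\nu(x_1,\ldots,x_k,\mu(x_1,\ldots,x_k))=\mu(x_1,\ldots,x_k)$ for all $x_1,\ldots,x_k\in X$. *)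

theory Defs
  imports "HOL-Analysis.Analysis" "HOL-Library.Multiset"
begin

text \<open>Points of X^k are represented as lists of length k; a k-mean is a map
  on lists, only its values on lists of length k matter.\<close>

definition is_mean :: "nat \<Rightarrow> ('a list \<Rightarrow> 'a) \<Rightarrow> bool" where
  "is_mean k \<mu> \<longleftrightarrow> (\<forall>x. \<mu> (replicate k x) = x)"

definition symmetric_mean :: "nat \<Rightarrow> ('a list \<Rightarrow> 'a) \<Rightarrow> bool" where
  "symmetric_mean k \<mu> \<longleftrightarrow>
     (\<forall>xs ys. length xs = k \<longrightarrow> mset ys = mset xs \<longrightarrow> \<mu> ys = \<mu> xs)"

definition coord_contractive :: "nat \<Rightarrow> real \<Rightarrow> ('a::metric_space list \<Rightarrow> 'a) \<Rightarrow> bool" where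
  "coord_contractive k \<rho> \<nu> \<longleftrightarrow>
     (\<forall>xs j y. length xs = k \<longrightarrow> j < k \<longrightarrow>
        dist (\<nu> xs) (\<nu> (xs[j := y])) \<le> \<rho> * dist (xs ! j) y)"

definition stable_reduction :: "nat \<Rightarrow> ('a list \<Rightarrow> 'a) \<Rightarrow> ('a list \<Rightarrow> 'a) \<Rightarrow> bool" where
  "stable_reduction k \<nu> \<mu> \<longleftrightarrow> is_mean k \<mu> \<and>
     (\<forall>xs. length xs = k \<longrightarrow> \<nu> (xs @ [\<mu> xs]) = \<mu> xs)"

end

theory Submission
  imports Defs
begin

lemma fix_unique:
  fixes \<nu> :: "'a::{metric_space, complete_space} list \<Rightarrow> 'a"
  assumes "0 < \<rho>" "\<rho> < 1" "coord_contractive (Suc k) \<rho> \<nu>" "length xs = k"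
  shows "\<exists>!z. \<nu> (xs @ [z]) = z"
proof -
  have L: "dist (\<nu> (xs @ [z])) (\<nu> (xs @ [y])) \<le> \<rho> * dist z y" for z y
  proof -
    have "dist (\<nu> (xs @ [z])) (\<nu> ((xs @ [z])[k := y])) \<le> \<rho> * dist ((xs @ [z]) ! k) y"
      using assms(3,4) unfolding coord_contractive_def by (metis length_append_singleton lessI)
    then show ?thesis using assms(4) by (simp add: list_update_append nth_append)
  qed
  show ?thesis
    by (rule banach_fix_type[where c=\<rho>]) (use assms L in auto)
qed

theorem proposition8p3:
  fixes \<nu> :: "'a::{metric_space, complete_space} list \<Rightarrow> 'a"
    and k :: nat and \<rho> :: real
  assumes "k \<ge> 2" and "0 < \<rho>" and "\<rho> < 1"
    and "is_mean (Suc k) \<nu>"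
    and "coord_contractive (Suc k) \<rho> \<nu>"
  shows "(\<exists>\<mu>. stable_reduction k \<nu> \<mu> \<and>
            (\<forall>\<mu>'. stable_reduction k \<nu> \<mu>' \<longrightarrow>
                 (\<forall>xs. length xs = k \<longrightarrow> \<mu>' xs = \<mu> xs)))
         \<and> (symmetric_mean (Suc k) \<nu> \<longrightarrow>
            (\<forall>\<mu>. stable_reduction k \<nu> \<mu> \<longrightarrow> symmetric_mean k \<mu>))"
proof -
  have U: "\<And>xs. length xs = k \<Longrightarrow> \<exists>!z. \<nu> (xs @ [z]) = z"
    using fix_unique assms(2,3,5) by blast
  define \<mu> where "\<mu> xs = (THE z. \<nu> (xs @ [z]) = z)" for xs
  have F: "\<nu> (xs @ [\<mu> xs]) = \<mu> xs" if "length xs = k" for xs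
    unfolding \<mu>_def using theI'[OF U[OF that]] .
  have E: "z = \<mu> xs" if "length xs = k" "\<nu> (xs @ [z]) = z" for xs z
    using U[OF that(1)] F[OF that(1)] that(2) by blast
  have M: "is_mean k \<mu>"
    unfolding is_mean_def
  proof
    fix x
    have "\<nu> (replicate k x @ [x]) = x"
      using assms(4) unfolding is_mean_def by (metis replicate_Suc replicate_append_same)
    then show "\<mu> (replicate k x) = x" using E by (metis length_replicate)
  qed
  have P1: "\<exists>\<mu>. stable_reduction k \<nu> \<mu> \<and>
            (\<forall>\<mu>'. stable_reduction k \<nu> \<mu>' \<longrightarrow>
                 (\<forall>xs. length xs = k \<longrightarrow> \<mu>' xs = \<mu> xs))"
    apply (rule exI[of _ \<mu>])
    using M F E unfolding stable_reduction_def by blast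
  have P2: "symmetric_mean k \<mu>'" if S: "symmetric_mean (Suc k) \<nu>" and R: "stable_reduction k \<nu> \<mu>'" for \<mu>'
    unfolding symmetric_mean_def
  proof (intro allI impI)
    fix xs ys :: "'a list"
    assume l: "length xs = k" and m: "mset ys = mset xs"
    have ly: "length ys = k" using l m by (metis size_mset)
    have "\<nu> (ys @ [\<mu>' xs]) = \<nu> (xs @ [\<mu>' xs])"
      using S l m unfolding symmetric_mean_def by simp
    also have "\<dots> = \<mu>' xs" using R l unfolding stable_reduction_def by blast
    finally have "\<mu>' xs = \<mu> ys" using E ly by blast
    moreover have "\<mu>' ys = \<mu> ys" using R ly E unfolding stable_reduction_def by blast
    ultimately show "\<mu>' ys = \<mu>' xs" by simp
  qed
  show ?thesis using P1 P2 by blast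
qed

end
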